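(* A parking function $(T,p)$ on a rooted tree $T$ with vertex set $[n]$ is prime if and only if every edge of $T$ is used by $p$.
   Context: $T$ is a rooted tree on vertex set $[n]$ with edges oriented towards the root. For $p\in[n]^n$, drivers $1,\dots,n$ arrive in order; driver $i$ parks at $p_i$ if unoccupied, otherwise follows the directed path towards the root and parks at the first unoccupied vertex, leaving if none exists. $(T,p)$ is a parking function if all drivers park. $T_v$ denotes the set of vertices $w$ with a directed path from $w$ to $v$ (including $v$). A parking function is prime if $|T_v|<|\{i:p_i\in T_v\}|$ for every non-root vertex $v$. An edge is used by $p$ if some driver, after failing to park at her preferred vertex, crosses it during her search for an unoccupied vertex. *)

theory Defs
  imports Main
begin

text \<open>A rooted tree on vertex set [n] = {1..n} with edges oriented towards the root
  is given by its root r and a parent function par: every non-root vertex v has the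
  unique outgoing edge v \<rightarrow> par v.  The value par r is irrelevant.\<close>

definition rooted_tree :: "nat \<Rightarrow> (nat \<Rightarrow> nat) \<Rightarrow> nat \<Rightarrow> bool" where
  "rooted_tree n par r \<longleftrightarrow> r \<in> {1..n} \<and>
     (\<forall>v\<in>{1..n} - {r}. par v \<in> {1..n}) \<and>
     (\<forall>v\<in>{1..n}. \<exists>k. (par ^^ k) v = r)"

definition dist :: "(nat \<Rightarrow> nat) \<Rightarrow> nat \<Rightarrow> nat \<Rightarrow> nat" where
  "dist par r x = (LEAST k. (par ^^ k) x = r)"

text \<open>There is a directed path from w to v (possibly of length 0); paths cannot leave the root.\<close>
definition reaches :: "(nat \<Rightarrow> nat) \<Rightarrow> nat \<Rightarrow> nat \<Rightarrow> nat \<Rightarrow> bool" where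
  "reaches par r w v \<longleftrightarrow> (\<exists>k. (par ^^ k) w = v \<and> (\<forall>j<k. (par ^^ j) w \<noteq> r))"

definition subtree :: "nat \<Rightarrow> (nat \<Rightarrow> nat) \<Rightarrow> nat \<Rightarrow> nat \<Rightarrow> nat set" where
  "subtree n par r v = {w \<in> {1..n}. reaches par r w v}"

definition finds_spot :: "(nat \<Rightarrow> nat) \<Rightarrow> nat \<Rightarrow> nat set \<Rightarrow> nat \<Rightarrow> bool" where
  "finds_spot par r occ x \<longleftrightarrow> (\<exists>j \<le> dist par r x. (par ^^ j) x \<notin> occ)"

text \<open>Number of edges crossed by the driver preferring x: up to the first free vertex,
  or all the way to the root if she leaves.\<close>
definition search_len :: "(nat \<Rightarrow> nat) \<Rightarrow> nat \<Rightarrow> nat set \<Rightarrow> nat \<Rightarrow> nat" where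
  "search_len par r occ x =
     (if finds_spot par r occ x then (LEAST j. j \<le> dist par r x \<and> (par ^^ j) x \<notin> occ)
      else dist par r x)"

definition park_step :: "(nat \<Rightarrow> nat) \<Rightarrow> nat \<Rightarrow> nat set \<Rightarrow> nat \<Rightarrow> nat set" where
  "park_step par r occ x =
     (if finds_spot par r occ x then insert ((par ^^ search_len par r occ x) x) occ else occ)"

primrec occupied :: "(nat \<Rightarrow> nat) \<Rightarrow> nat \<Rightarrow> (nat \<Rightarrow> nat) \<Rightarrow> nat \<Rightarrow> nat set" where
  "occupied par r p 0 = {}"
| "occupied par r p (Suc i) = park_step par r (occupied par r p i) (p (Suc i))"

definition parking_function :: "nat \<Rightarrow> (nat \<Rightarrow> nat) \<Rightarrow> nat \<Rightarrow> (nat \<Rightarrow> nat) \<Rightarrow> bool" where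
  "parking_function n par r p \<longleftrightarrow>
     (\<forall>i\<in>{1..n}. finds_spot par r (occupied par r p (i - 1)) (p i))"

definition prime_pf :: "nat \<Rightarrow> (nat \<Rightarrow> nat) \<Rightarrow> nat \<Rightarrow> (nat \<Rightarrow> nat) \<Rightarrow> bool" where
  "prime_pf n par r p \<longleftrightarrow> parking_function n par r p \<and>
     (\<forall>v\<in>{1..n} - {r}. card (subtree n par r v) < card {i\<in>{1..n}. p i \<in> subtree n par r v})"

text \<open>The edge v \<rightarrow> par v (v a non-root vertex) is used by p: some driver, having failed
  at her preferred vertex, crosses it (i.e. leaves v towards par v) during her search.\<close>
definition edge_used :: "nat \<Rightarrow> (nat \<Rightarrow> nat) \<Rightarrow> nat \<Rightarrow> (nat \<Rightarrow> nat) \<Rightarrow> nat \<Rightarrow> bool" where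
  "edge_used n par r p v \<longleftrightarrow>
     (\<exists>i\<in>{1..n}. p i \<in> occupied par r p (i - 1) \<and>
        (\<exists>j < search_len par r (occupied par r p (i - 1)) (p i). (par ^^ j) (p i) = v))"

end

theory Submission
  imports Defs
begin

definition spot :: "(nat \<Rightarrow> nat) \<Rightarrow> nat \<Rightarrow> (nat \<Rightarrow> nat) \<Rightarrow> nat \<Rightarrow> nat" where
  "spot par r p i = (par ^^ search_len par r (occupied par r p (i - 1)) (p i)) (p i)"

lemma funpow_add_apply: "(f ^^ (a + b)) x = (f ^^ a) ((f ^^ b) x)"
  by (simp add: funpow_add)

lemma cycle_mod:
  assumes "(f ^^ L) v = v" "L > 0"
  shows "(f ^^ i) v = (f ^^ (i mod L)) v"
proof (induction i rule: less_induct)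
  case (less i)
  show ?case
  proof (cases "i < L")
    case True then show ?thesis by simp
  next
    case False
    then have "i = (i - L) + L" by simp
    then have "(f ^^ i) v = (f ^^ (i - L)) ((f ^^ L) v)" by (metis funpow_add_apply)
    also have "\<dots> = (f ^^ (i - L)) v" using assms by simp
    also have "\<dots> = (f ^^ ((i - L) mod L)) v" using less assms False by simp
    also have "(i - L) mod L = i mod L" using False by (simp add: le_mod_geq)
    finally show ?thesis .
  qed
qed

lemma dist_min: "j < dist par r x \<Longrightarrow> (par ^^ j) x \<noteq> r"
  unfolding dist_def using not_less_Least by blast

lemma sl_props:
  assumes "finds_spot par r occ x"
  shows "search_len par r occ x \<le> dist par r x \<and> (par ^^ search_len par r occ x) x \<notin> occ
     \<and> (\<forall>j<search_len par r occ x. (par ^^ j) x \<in> occ)"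
proof -
  have ex: "\<exists>j. j \<le> dist par r x \<and> (par ^^ j) x \<notin> occ"
    using assms unfolding finds_spot_def by blast
  have sl: "search_len par r occ x = (LEAST j. j \<le> dist par r x \<and> (par ^^ j) x \<notin> occ)"
    using assms unfolding search_len_def by simp
  have A: "search_len par r occ x \<le> dist par r x \<and> (par ^^ search_len par r occ x) x \<notin> occ"
    unfolding sl by (rule LeastI_ex[OF ex])
  have B: "\<forall>j<search_len par r occ x. (par ^^ j) x \<in> occ"
  proof (intro allI impI)
    fix j assume j: "j < search_len par r occ x"
    then have "\<not> (j \<le> dist par r x \<and> (par ^^ j) x \<notin> occ)"
      unfolding sl by (rule not_less_Least)
    then show "(par ^^ j) x \<in> occ" using j A by auto
  qed
  show ?thesis using A B by blast
qed

context
  fixes n r :: nat and par p :: "nat \<Rightarrow> nat"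
  assumes T: "rooted_tree n par r"
    and P: "\<forall>i\<in>{1..n}. p i \<in> {1..n}"
    and PF: "parking_function n par r p"
begin

lemma dist_r: "x \<in> {1..n} \<Longrightarrow> (par ^^ dist par r x) x = r"
  using T unfolding rooted_tree_def dist_def by (meson LeastI)

lemma path_in: "x \<in> {1..n} \<Longrightarrow> j \<le> dist par r x \<Longrightarrow> (par ^^ j) x \<in> {1..n}"
proof (induction j)
  case 0 then show ?case by simp
next
  case (Suc j)
  then have "(par ^^ j) x \<in> {1..n}" by simp
  moreover have "(par ^^ j) x \<noteq> r" using Suc.prems dist_min by simp
  ultimately show ?case using T unfolding rooted_tree_def by simp
qed

lemma fs: "i \<in> {1..n} \<Longrightarrow> finds_spot par r (occupied par r p (i - 1)) (p i)"
  using PF unfolding parking_function_def by blast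

lemma occ_eq: "i \<le> n \<Longrightarrow> occupied par r p i = spot par r p ` {1..i}"
proof (induction i)
  case 0 then show ?case by simp
next
  case (Suc i)
  have f: "finds_spot par r (occupied par r p i) (p (Suc i))"
    using fs[of "Suc i"] Suc.prems by simp
  have "{1..Suc i} = insert (Suc i) {1..i}" by auto
  then show ?case using Suc f
    by (simp add: park_step_def spot_def)
qed

lemma spot_notin: "i \<in> {1..n} \<Longrightarrow> spot par r p i \<notin> occupied par r p (i - 1)"
  using sl_props[OF fs] unfolding spot_def by blast

lemma spot_in: "i \<in> {1..n} \<Longrightarrow> spot par r p i \<in> {1..n}"
  using sl_props[OF fs] path_in P unfolding spot_def by blast

lemma spot_inj: "inj_on (spot par r p) {1..n}"
proof -
  have *: "spot par r p i \<noteq> spot par r p i'" if "i < i'" "i \<in> {1..n}" "i' \<in> {1..n}" for i i'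
  proof -
    have "spot par r p i \<in> occupied par r p (i' - 1)"
      using occ_eq[of "i' - 1"] that by auto
    then show ?thesis using spot_notin[OF that(3)] by auto
  qed
  show ?thesis
    by (rule inj_onI) (metis * linorder_cases)
qed

lemma occ_full: "spot par r p ` {1..n} = {1..n}"
proof -
  have "card (spot par r p ` {1..n}) = n" using spot_inj by (simp add: card_image)
  moreover have "spot par r p ` {1..n} \<subseteq> {1..n}" using spot_in by auto
  ultimately show ?thesis by (simp add: card_subset_eq)
qed

end

theorem corollary2p5:
  fixes n r :: nat and par p :: "nat \<Rightarrow> nat"
  assumes "rooted_tree n par r"
    and "\<forall>i\<in>{1..n}. p i \<in> {1..n}"
    and "parking_function n par r p"
  shows "prime_pf n par r p \<longleftrightarrow> (\<forall>v\<in>{1..n} - {r}. edge_used n par r p v)"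
proof -
  note T = assms(1) and P = assms(2) and PF = assms(3)
  define sl where "sl i = search_len par r (occupied par r p (i - 1)) (p i)" for i
  have spot_sl: "spot par r p i = (par ^^ sl i) (p i)" for i unfolding spot_def sl_def by simp
  have slp: "sl i \<le> dist par r (p i) \<and> (\<forall>j<sl i. (par ^^ j) (p i) \<in> occupied par r p (i - 1))"
    if "i \<in> {1..n}" for i
    using sl_props[OF fs[OF T P PF that]] unfolding sl_def by blast
  show ?thesis
  proof
    assume pr: "prime_pf n par r p"
    show "\<forall>v\<in>{1..n} - {r}. edge_used n par r p v"
    proof
      fix v assume v: "v \<in> {1..n} - {r}"
      define A where "A = {i\<in>{1..n}. p i \<in> subtree n par r v}"
      have lt: "card (subtree n par r v) < card A" using pr v unfolding prime_pf_def A_def by blast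
      have "\<exists>i\<in>A. spot par r p i \<notin> subtree n par r v"
      proof (rule ccontr)
        assume "\<not> ?thesis"
        then have "spot par r p ` A \<subseteq> subtree n par r v" by auto
        moreover have "inj_on (spot par r p) A"
          using spot_inj[OF T P PF] unfolding A_def by (rule inj_on_subset) auto
        moreover have "finite (subtree n par r v)" unfolding subtree_def by simp
        ultimately have "card A \<le> card (subtree n par r v)"
          using card_inj_on_le by blast
        then show False using lt by simp
      qed
      then obtain i where iA: "i \<in> A" and ns: "spot par r p i \<notin> subtree n par r v" by blast
      have i: "i \<in> {1..n}" and pi: "p i \<in> subtree n par r v" using iA unfolding A_def by auto
      then obtain k where k: "(par ^^ k) (p i) = v" "\<forall>j<k. (par ^^ j) (p i) \<noteq> r"
        unfolding subtree_def reaches_def by blast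
      have "k < sl i"
      proof (rule ccontr)
        assume "\<not> k < sl i"
        then have kk: "k = (k - sl i) + sl i" by simp
        have "reaches par r (spot par r p i) v"
          unfolding reaches_def spot_sl
        proof (intro exI conjI allI impI)
          show "(par ^^ (k - sl i)) ((par ^^ sl i) (p i)) = v"
            using k(1) kk by (metis funpow_add_apply)
        next
          fix j assume "j < k - sl i"
          then have "j + sl i < k" by simp
          then show "(par ^^ j) ((par ^^ sl i) (p i)) \<noteq> r"
            using k(2) by (metis funpow_add_apply)
        qed
        then show False using ns spot_in[OF T P PF i] unfolding subtree_def by simp
      qed
      moreover have "p i \<in> occupied par r p (i - 1)"
        using slp[OF i] calculation by (metis funpow_0 gr_zeroI not_less0)
      ultimately show "edge_used n par r p v"
        unfolding edge_used_def sl_def[symmetric] using i k(1) by blast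
    qed
  next
    assume eu: "\<forall>v\<in>{1..n} - {r}. edge_used n par r p v"
    have "card (subtree n par r v) < card {i\<in>{1..n}. p i \<in> subtree n par r v}"
      if v: "v \<in> {1..n} - {r}" for v
    proof -
      define A where "A = {i\<in>{1..n}. p i \<in> subtree n par r v}"
      obtain i0 j where i0: "i0 \<in> {1..n}" and j: "j < sl i0" "(par ^^ j) (p i0) = v"
        using eu v unfolding edge_used_def sl_def by blast
      have pin: "p i0 \<in> {1..n}" using P i0 by blast
      have dm: "(par ^^ j') (p i0) \<noteq> r" if "j' < sl i0" for j'
        using dist_min[of j' par r "p i0"] slp[OF i0] that by simp
      have "reaches par r (p i0) v"
        unfolding reaches_def
      proof (intro exI conjI allI impI)
        show "(par ^^ j) (p i0) = v" by (rule j(2))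
      next
        fix j' assume "j' < j"
        then show "(par ^^ j') (p i0) \<noteq> r" using dm j(1) by simp
      qed
      then have "p i0 \<in> subtree n par r v" unfolding subtree_def using pin by simp
      then have i0A: "i0 \<in> A" unfolding A_def using i0 by simp
      have ns: "spot par r p i0 \<notin> subtree n par r v"
      proof
        assume "spot par r p i0 \<in> subtree n par r v"
        then obtain m where m: "(par ^^ m) ((par ^^ sl i0) (p i0)) = v"
          "\<forall>j'<m. (par ^^ j') ((par ^^ sl i0) (p i0)) \<noteq> r"
          unfolding subtree_def reaches_def spot_sl by blast
        define L where "L = m + sl i0 - j"
        have L0: "L > 0" unfolding L_def using j by simp
        have mj: "m + sl i0 = L + j" unfolding L_def using j by simp
        have cyc: "(par ^^ L) v = v"
          using m(1) j(2) mj by (metis funpow_add_apply)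
        have nr: "(par ^^ i) v \<noteq> r" if "i < L" for i
        proof -
          have e: "(par ^^ i) v = (par ^^ (i + j)) (p i0)" using j(2) by (metis funpow_add_apply)
          show ?thesis
          proof (cases "i + j < sl i0")
            case True then show ?thesis using e dm by simp
          next
            case False
            then have "i + j = (i + j - sl i0) + sl i0" "i + j - sl i0 < m" using that mj by auto
            then show ?thesis using e m(2) by (metis funpow_add_apply)
          qed
        qed
        have vin: "v \<in> {1..n}" using v by simp
        have "(par ^^ dist par r v) v = r" using dist_r[OF T P PF vin] .
        moreover have "(par ^^ dist par r v) v = (par ^^ (dist par r v mod L)) v"
          using cycle_mod[OF cyc L0] .
        ultimately show False using nr L0 by simp
      qed
      have sub: "subtree n par r v \<subseteq> spot par r p ` A"
      proof
        fix w assume w: "w \<in> subtree n par r v"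
        then have "w \<in> {1..n}" unfolding subtree_def by simp
        then obtain i where i: "i \<in> {1..n}" "w = spot par r p i"
          using occ_full[OF T P PF] by blast
        obtain m where m: "(par ^^ m) ((par ^^ sl i) (p i)) = v"
          "\<forall>j'<m. (par ^^ j') ((par ^^ sl i) (p i)) \<noteq> r"
          using w i unfolding subtree_def reaches_def spot_sl by blast
        have dmi: "(par ^^ j') (p i) \<noteq> r" if "j' < sl i" for j'
          using dist_min[of j' par r "p i"] slp[OF i(1)] that by simp
        have "reaches par r (p i) v"
          unfolding reaches_def
        proof (intro exI conjI allI impI)
          show "(par ^^ (m + sl i)) (p i) = v" using m(1) by (metis funpow_add_apply)
        next
          fix j' assume j': "j' < m + sl i"
          show "(par ^^ j') (p i) \<noteq> r"
          proof (cases "j' < sl i")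
            case True then show ?thesis using dmi by simp
          next
            case False
            then have "j' = (j' - sl i) + sl i" "j' - sl i < m" using j' by auto
            then show ?thesis using m(2) by (metis funpow_add_apply)
          qed
        qed
        then have "i \<in> A" unfolding A_def subtree_def using i P by auto
        then show "w \<in> spot par r p ` A" using i by blast
      qed
      have injA: "inj_on (spot par r p) A"
        using spot_inj[OF T P PF] unfolding A_def by (rule inj_on_subset) auto
      have finA: "finite A" unfolding A_def by simp
      have "insert (spot par r p i0) (subtree n par r v) \<subseteq> spot par r p ` A"
        using sub i0A by auto
      then have "card (insert (spot par r p i0) (subtree n par r v)) \<le> card (spot par r p ` A)"
        using finA by (simp add: card_mono)
      moreover have "finite (subtree n par r v)" unfolding subtree_def by simp
      ultimately have "card (subtree n par r v) + 1 \<le> card A"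
        using ns injA by (simp add: card_image)
      then show ?thesis unfolding A_def by simp
    qed
    then show "prime_pf n par r p" using PF unfolding prime_pf_def by blast
  qed
qed

end
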